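(* Let $r>\tfrac32$, $c_0\in\mathcal I^r(\mathbb{S}^1,\mathbb{R}^d)$ and $\rho>0$. Then for all $c_1,c_2\in B_{G^r}(c_0,\rho)$, $$\|c_2-c_1\|_{H^r}\le\alpha(r,c_0,4\rho)\,\operatorname{dist}_{G^r}(c_1,c_2),$$ where $\alpha(r,c_0,\rho')>0$ denotes a constant such that $\alpha^{-1}\|h\|_{H^r}\le\|h\|_{G^r_c}\le\alpha\|h\|_{H^r}$ for all $c\in B_{G^r}(c_0,\rho')$ and all $h\in H^r(\mathbb{S}^1,\mathbb{R}^d)$ (such a constant exists for every $\rho'>0$).
   Context: $\mathbb{S}^1=\mathbb{R}/\mathbb{Z}$; $\|f\|_{H^q}^2=\sum_n(1+n^2)^q|\hat f(n)|^2$, $\|f\|_{\dot H^q}^2=\sum_n|n|^{2q}|\hat f(n)|^2$. For $r>\tfrac32$, $\mathcal I^r(\mathbb{S}^1,\mathbb{R}^d)=\{c\in H^r:c_\theta\neq0\text{ everywhere}\}$ with $T_c\mathcal I^r=H^r$. For $c$: $l_c=\int_0^1|c_\theta|d\theta$, $ds=|c_\theta|d\theta$, $\psi_c(\theta)=\frac1{l_c}\int_0^\theta|c_\theta|$. The metric $G^r$: $\|h\|_{G^r_c}^2=\int|h|^2ds+l_c^{1-2r}\|h\circ\psi_c^{-1}\|_{\dot H^r}^2$; $\operatorname{dist}_{G^r}$ is its geodesic distance on $\mathcal I^r$ (infimum of lengths of piecewise $C^1$ paths) and $B_{G^r}(c_0,\rho)=\{c:\operatorname{dist}_{G^r}(c,c_0)<\rho\}$.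 *)

theory Defs
  imports "HOL-Analysis.Analysis"
begin

text \<open>Curves on S^1 = R/Z are modelled as 1-periodic functions real => 'a,
  where 'a is a Euclidean space (R^d).  Fourier coefficients are taken over [0,1].\<close>

definition fcoef :: "(real \<Rightarrow> real) \<Rightarrow> int \<Rightarrow> complex" where
  "fcoef g n = integral {0..1} (\<lambda>x. complex_of_real (g x) * cis (- 2 * pi * real_of_int n * x))"

definition fc_sq :: "(real \<Rightarrow> 'a::euclidean_space) \<Rightarrow> int \<Rightarrow> real" where
  "fc_sq f n = (\<Sum>b\<in>Basis. (cmod (fcoef (\<lambda>x. f x \<bullet> b) n))\<^sup>2)"

definition Hr_sq :: "real \<Rightarrow> (real \<Rightarrow> 'a::euclidean_space) \<Rightarrow> real" where
  "Hr_sq q f = infsum (\<lambda>n::int. (1 + (real_of_int n)\<^sup>2) powr q * fc_sq f n) UNIV"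

definition Hr_norm :: "real \<Rightarrow> (real \<Rightarrow> 'a::euclidean_space) \<Rightarrow> real" where
  "Hr_norm q f = sqrt (Hr_sq q f)"

definition Hdot_sq :: "real \<Rightarrow> (real \<Rightarrow> 'a::euclidean_space) \<Rightarrow> real" where
  "Hdot_sq q f = infsum (\<lambda>n::int. (real_of_int \<bar>n\<bar>) powr (2 * q) * fc_sq f n) UNIV"

definition in_H :: "real \<Rightarrow> (real \<Rightarrow> 'a::euclidean_space) \<Rightarrow> bool" where
  "in_H q f \<longleftrightarrow> (\<forall>x. f (x + 1) = f x) \<and> f absolutely_integrable_on {0..1}
     \<and> (\<lambda>x. (norm (f x))\<^sup>2) integrable_on {0..1}
     \<and> (\<lambda>n::int. (1 + (real_of_int n)\<^sup>2) powr q * fc_sq f n) summable_on UNIV"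

definition Imm :: "real \<Rightarrow> (real \<Rightarrow> 'a::euclidean_space) \<Rightarrow> bool" where
  "Imm r c \<longleftrightarrow> in_H r c \<and> c C1_differentiable_on UNIV
     \<and> (\<forall>\<theta>. vector_derivative c (at \<theta>) \<noteq> 0)"

definition len :: "(real \<Rightarrow> 'a::euclidean_space) \<Rightarrow> real" where
  "len c = integral {0..1} (\<lambda>\<theta>. norm (vector_derivative c (at \<theta>)))"

definition psi :: "(real \<Rightarrow> 'a::euclidean_space) \<Rightarrow> real \<Rightarrow> real" where
  "psi c \<theta> = integral {0..\<theta>} (\<lambda>t. norm (vector_derivative c (at t))) / len c"

definition G_sq :: "real \<Rightarrow> (real \<Rightarrow> 'a::euclidean_space) \<Rightarrow> (real \<Rightarrow> 'a) \<Rightarrow> real" where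
  "G_sq r c h = integral {0..1} (\<lambda>\<theta>. (norm (h \<theta>))\<^sup>2 * norm (vector_derivative c (at \<theta>)))
     + len c powr (1 - 2 * r) * Hdot_sq r (h \<circ> inv_into {0..1} (psi c))"

definition G_norm :: "real \<Rightarrow> (real \<Rightarrow> 'a::euclidean_space) \<Rightarrow> (real \<Rightarrow> 'a) \<Rightarrow> real" where
  "G_norm r c h = sqrt (G_sq r c h)"

definition H_has_deriv :: "real \<Rightarrow> (real \<Rightarrow> real \<Rightarrow> 'a::euclidean_space) \<Rightarrow> (real \<Rightarrow> 'a)
    \<Rightarrow> real \<Rightarrow> real set \<Rightarrow> bool" where
  "H_has_deriv r \<gamma> D t S \<longleftrightarrow>
     ((\<lambda>s. Hr_norm r (\<lambda>\<theta>. (1 / (s - t)) *\<^sub>R (\<gamma> s \<theta> - \<gamma> t \<theta>) - D \<theta>)) \<longlongrightarrow> 0) (at t within S)"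

definition H_continuous_on :: "real \<Rightarrow> real set \<Rightarrow> (real \<Rightarrow> real \<Rightarrow> 'a::euclidean_space) \<Rightarrow> bool" where
  "H_continuous_on r S D \<longleftrightarrow>
     (\<forall>t\<in>S. ((\<lambda>s. Hr_norm r (\<lambda>\<theta>. D s \<theta> - D t \<theta>)) \<longlongrightarrow> 0) (at t within S))"

definition pw_C1_path :: "real \<Rightarrow> (real \<Rightarrow> real \<Rightarrow> 'a::euclidean_space) \<Rightarrow> (real \<Rightarrow> real \<Rightarrow> 'a) \<Rightarrow> bool" where
  "pw_C1_path r \<gamma> D \<longleftrightarrow> (\<forall>t\<in>{0..1}. Imm r (\<gamma> t)) \<and>
     (\<exists>K. finite K \<and> {0, 1} \<subseteq> K \<and> K \<subseteq> {0..1} \<and>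
        (\<forall>a\<in>K. \<forall>b\<in>K. a < b \<and> {a<..<b} \<inter> K = {} \<longrightarrow>
           (\<exists>D'. (\<forall>t\<in>{a..b}. in_H r (D' t) \<and> H_has_deriv r \<gamma> (D' t) t {a..b})
                 \<and> H_continuous_on r {a..b} D'
                 \<and> (\<forall>t\<in>{a<..<b}. D t = D' t))))"

definition path_len :: "real \<Rightarrow> (real \<Rightarrow> real \<Rightarrow> 'a::euclidean_space) \<Rightarrow> (real \<Rightarrow> real \<Rightarrow> 'a) \<Rightarrow> real" where
  "path_len r \<gamma> D = integral {0..1} (\<lambda>t. G_norm r (\<gamma> t) (D t))"

text \<open>geodesic distance (infimum of lengths of piecewise C^1 paths; +\<infinity> if there is none)\<close>
definition distG :: "real \<Rightarrow> (real \<Rightarrow> 'a::euclidean_space) \<Rightarrow> (real \<Rightarrow> 'a) \<Rightarrow> ereal" where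
  "distG r c1 c2 = Inf {ereal (path_len r \<gamma> D) | \<gamma> D. pw_C1_path r \<gamma> D \<and> \<gamma> 0 = c1 \<and> \<gamma> 1 = c2
       \<and> (\<lambda>t. G_norm r (\<gamma> t) (D t)) integrable_on {0..1}}"

definition ballG :: "real \<Rightarrow> (real \<Rightarrow> 'a::euclidean_space) \<Rightarrow> real \<Rightarrow> (real \<Rightarrow> 'a) set" where
  "ballG r c0 \<rho> = {c. Imm r c \<and> distG r c c0 < ereal \<rho>}"

end

theory Submission
  imports Defs
begin

definition wt :: "real \<Rightarrow> int \<Rightarrow> real" where
  "wt r n = (1 + (real_of_int n)\<^sup>2) powr r"

lemma wt_pos: "wt r n > 0"
proof -
  have "1 + (real_of_int n)\<^sup>2 > 0" by (simp add: add_pos_nonneg)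
  then show ?thesis unfolding wt_def by simp
qed

lemma ai_neg: "(\<lambda>x. - f x) absolutely_integrable_on S" if "f absolutely_integrable_on S"
  for f :: "real \<Rightarrow> 'a::euclidean_space"
  using absolutely_integrable_scaleR_left[where c="-1", OF that] by simp

lemma ai_diff: "f absolutely_integrable_on S \<Longrightarrow> g absolutely_integrable_on S \<Longrightarrow> (\<lambda>x. f x - g x) absolutely_integrable_on S"
  for f g :: "real \<Rightarrow> 'a::euclidean_space"
  by (rule set_integral_diff(1))

lemma ai_add: "f absolutely_integrable_on S \<Longrightarrow> g absolutely_integrable_on S \<Longrightarrow> (\<lambda>x. f x + g x) absolutely_integrable_on S"
  for f g :: "real \<Rightarrow> 'a::euclidean_space"
  by (rule set_integral_add(1))

lemma ai_scale: "f absolutely_integrable_on S \<Longrightarrow> (\<lambda>x. c *\<^sub>R f x) absolutely_integrable_on S"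
  for f :: "real \<Rightarrow> 'a::euclidean_space"
  by (rule absolutely_integrable_scaleR_left)

lemma ai0: "(\<lambda>x. 0::'a::euclidean_space) absolutely_integrable_on S"
  by (simp add: absolutely_integrable_on_def)

definition CC :: "(real \<Rightarrow> 'a::euclidean_space) \<Rightarrow> int \<Rightarrow> 'a \<Rightarrow> complex" where
  "CC f n b = fcoef (\<lambda>x. f x \<bullet> b) n"

lemma fc_sq_CC: "fc_sq f n = (\<Sum>b\<in>Basis. (cmod (CC f n b))\<^sup>2)"
  unfolding fc_sq_def CC_def by simp

lemma fc_sq_nonneg: "fc_sq f n \<ge> 0"
  unfolding fc_sq_def by (simp add: sum_nonneg)

lemma fcoef_has_integral:
  fixes g :: "real \<Rightarrow> real"
  assumes "g absolutely_integrable_on {0..1}"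
  shows "((\<lambda>x. complex_of_real (g x) * cis (- 2 * pi * real_of_int n * x)) has_integral fcoef g n) {0..1}"
proof -
  have m: "(\<lambda>x. cis (- 2 * pi * real_of_int n * x)) \<in> borel_measurable (lebesgue_on {0..1::real})"
    by (intro continuous_imp_measurable_on_sets_lebesgue continuous_intros) auto
  have b: "bounded ((\<lambda>x. cis (- 2 * pi * real_of_int n * x)) ` {0..1::real})"
    unfolding bounded_iff by (intro exI[of _ 1]) auto
  have g: "(\<lambda>x. complex_of_real (g x)) absolutely_integrable_on {0..1}"
    using absolutely_integrable_linear[OF assms bounded_linear_of_real] by (simp add: o_def)
  have "(\<lambda>x. cis (- 2 * pi * real_of_int n * x) * complex_of_real (g x)) absolutely_integrable_on {0..1}"
    by (rule absolutely_integrable_bounded_measurable_product[OF bilinear_times m _ b g]) auto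
  then have "(\<lambda>x. complex_of_real (g x) * cis (- 2 * pi * real_of_int n * x)) integrable_on {0..1}"
    by (simp add: mult.commute absolutely_integrable_on_def)
  then show ?thesis unfolding fcoef_def by (simp add: has_integral_integral)
qed

lemma fcoef_lin:
  fixes g1 g2 g3 :: "real \<Rightarrow> real"
  assumes "g1 absolutely_integrable_on {0..1}" "g2 absolutely_integrable_on {0..1}"
    "g3 absolutely_integrable_on {0..1}"
  shows "fcoef (\<lambda>x. c * (g1 x - g2 x) - g3 x) n
     = of_real c * (fcoef g1 n - fcoef g2 n) - fcoef g3 n"
proof -
  let ?e = "\<lambda>x. cis (- 2 * pi * real_of_int n * x)"
  have "((\<lambda>x. of_real c * (complex_of_real (g1 x) * ?e x - complex_of_real (g2 x) * ?e x)
          - complex_of_real (g3 x) * ?e x) has_integral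
        (of_real c * (fcoef g1 n - fcoef g2 n) - fcoef g3 n)) {0..1}"
    by (intro has_integral_diff has_integral_mult_right fcoef_has_integral assms)
  then have "((\<lambda>x. complex_of_real (c * (g1 x - g2 x) - g3 x) * ?e x) has_integral
        (of_real c * (fcoef g1 n - fcoef g2 n) - fcoef g3 n)) {0..1}"
    by (simp add: algebra_simps)
  then show ?thesis unfolding fcoef_def by (rule integral_unique)
qed

lemma fcoef_scale: "fcoef (\<lambda>x. c * g x) n = of_real c * fcoef g n"
proof -
  have "fcoef (\<lambda>x. c * g x) n = integral {0..1}
     (\<lambda>x. of_real c * (complex_of_real (g x) * cis (- 2 * pi * real_of_int n * x)))"
    unfolding fcoef_def by (simp add: algebra_simps)
  also have "\<dots> = of_real c * fcoef g n" unfolding fcoef_def by (rule integral_mult_right)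
  finally show ?thesis .
qed

lemma CC_lin:
  assumes "f absolutely_integrable_on {0..1}" "g absolutely_integrable_on {0..1}"
    "h absolutely_integrable_on {0..1}"
  shows "CC (\<lambda>x. c *\<^sub>R (f x - g x) - h x) n b = of_real c * (CC f n b - CC g n b) - CC h n b"
proof -
  have "CC (\<lambda>x. c *\<^sub>R (f x - g x) - h x) n b = fcoef (\<lambda>x. c * (f x \<bullet> b - g x \<bullet> b) - h x \<bullet> b) n"
    unfolding CC_def by (simp add: inner_diff_left)
  also have "\<dots> = of_real c * (CC f n b - CC g n b) - CC h n b"
    unfolding CC_def by (intro fcoef_lin absolutely_integrable_component assms)
  finally show ?thesis .
qed

lemma CC_zero: "CC (\<lambda>x. 0) n b = 0"
  unfolding CC_def fcoef_def by simp

lemma CC_diff: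
  assumes "f absolutely_integrable_on {0..1}" "g absolutely_integrable_on {0..1}"
  shows "CC (\<lambda>x. f x - g x) n b = CC f n b - CC g n b"
  using CC_lin[OF assms ai0, of 1 n b] by (simp add: CC_zero)

lemma CC_add:
  assumes "f absolutely_integrable_on {0..1}" "g absolutely_integrable_on {0..1}"
  shows "CC (\<lambda>x. f x + g x) n b = CC f n b + CC g n b"
proof -
  have "CC (\<lambda>x. 1 *\<^sub>R (f x - 0) - (- g x)) n b = 1 * (CC f n b - CC (\<lambda>x. 0) n b) - CC (\<lambda>x. - g x) n b"
    using CC_lin[OF assms(1) ai0 ai_neg[OF assms(2)], of 1 n b]
    by simp
  moreover have "CC (\<lambda>x. - g x) n b = - CC g n b"
    using CC_diff[OF ai0 assms(2), of n b] by (simp add: CC_zero)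
  ultimately show ?thesis by (simp add: CC_zero)
qed

lemma CC_scale: "CC (\<lambda>x. c *\<^sub>R f x) n b = of_real c * CC f n b"
  unfolding CC_def by (simp add: fcoef_scale)

lemma CC_uminus: "CC (\<lambda>x. - f x) n b = - CC f n b"
  using CC_scale[of "-1" f n b] by simp

lemma fc_sq_scale: "fc_sq (\<lambda>x. c *\<^sub>R f x) n = c\<^sup>2 * fc_sq f n"
  unfolding fc_sq_CC CC_scale by (simp add: norm_mult power_mult_distrib sum_distrib_left)

definition SM :: "real \<Rightarrow> (real \<Rightarrow> 'a::euclidean_space) \<Rightarrow> bool" where
  "SM r f \<longleftrightarrow> (\<lambda>n. wt r n * fc_sq f n) summable_on UNIV"

lemma in_H_SM: "in_H r f \<Longrightarrow> SM r f"
  unfolding in_H_def SM_def wt_def by simp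

lemma in_H_AI: "in_H r f \<Longrightarrow> f absolutely_integrable_on {0..1}"
  unfolding in_H_def by simp

lemma sq_sum_bound: "((x::real) + y)\<^sup>2 \<le> 2 * x\<^sup>2 + 2 * y\<^sup>2"
proof -
  have "0 \<le> (x - y)\<^sup>2" by simp
  moreover have "(x+y)\<^sup>2 = x\<^sup>2 + y\<^sup>2 + 2*x*y" by (rule power2_sum)
  moreover have "(x-y)\<^sup>2 = x\<^sup>2 + y\<^sup>2 - 2*x*y" by (rule power2_diff)
  ultimately show ?thesis by linarith
qed

lemma cmod_diff_sq: "(cmod (a - b))\<^sup>2 \<le> 2*(cmod a)\<^sup>2 + 2*(cmod b)\<^sup>2"
proof -
  have "cmod (a - b) \<le> cmod a + cmod b" by (rule norm_triangle_ineq4)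
  then have "(cmod (a-b))\<^sup>2 \<le> (cmod a + cmod b)\<^sup>2" by (simp add: power_mono)
  also have "\<dots> \<le> 2*(cmod a)\<^sup>2 + 2*(cmod b)\<^sup>2" by (rule sq_sum_bound)
  finally show ?thesis .
qed

lemma fc_sq_diff_le:
  assumes "f absolutely_integrable_on {0..1}" "g absolutely_integrable_on {0..1}"
  shows "fc_sq (\<lambda>x. f x - g x) n \<le> 2 * fc_sq f n + 2 * fc_sq g n"
  unfolding fc_sq_CC CC_diff[OF assms] sum_distrib_left sum.distrib[symmetric]
  by (intro sum_mono cmod_diff_sq)

lemma wfc_nonneg: "0 \<le> wt r n * fc_sq f n"
  by (intro mult_nonneg_nonneg less_imp_le[OF wt_pos] fc_sq_nonneg)

lemma wfc_sum_nonneg: "0 \<le> (\<Sum>n\<in>F. wt r n * fc_sq f n)"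
  by (simp add: sum_nonneg wfc_nonneg)

lemma SM_diff:
  assumes "f absolutely_integrable_on {0..1}" "g absolutely_integrable_on {0..1}" "SM r f" "SM r g"
  shows "SM r (\<lambda>x. f x - g x)"
  unfolding SM_def
proof (rule summable_on_comparison_test)
  show "(\<lambda>n. 2 * (wt r n * fc_sq f n) + 2 * (wt r n * fc_sq g n)) summable_on UNIV"
    using assms(3,4) unfolding SM_def by (intro summable_on_add summable_on_cmult_right)
  fix n :: int
  show "wt r n * fc_sq (\<lambda>x. f x - g x) n \<le> 2 * (wt r n * fc_sq f n) + 2 * (wt r n * fc_sq g n)"
    using mult_left_mono[OF fc_sq_diff_le[OF assms(1,2), of n] less_imp_le[OF wt_pos[of r n]]]
    by (simp add: algebra_simps)
  show "0 \<le> wt r n * fc_sq (\<lambda>x. f x - g x) n"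
    by (rule wfc_nonneg)
qed

lemma SM_scale: "SM r f \<Longrightarrow> SM r (\<lambda>x. c *\<^sub>R f x)"
  unfolding SM_def fc_sq_scale
  using summable_on_cmult_right[of "\<lambda>n. wt r n * fc_sq f n" UNIV "c\<^sup>2"]
  by (simp add: algebra_simps)

definition PN :: "real \<Rightarrow> int set \<Rightarrow> (real \<Rightarrow> 'a::euclidean_space) \<Rightarrow> real" where
  "PN r F f = sqrt (\<Sum>n\<in>F. wt r n * fc_sq f n)"

lemma PN_nonneg: "PN r F f \<ge> 0"
  unfolding PN_def using wfc_sum_nonneg by simp

lemma Hr_norm_wt: "Hr_norm r f = sqrt (infsum (\<lambda>n. wt r n * fc_sq f n) UNIV)"
  by (simp add: Hr_norm_def Hr_sq_def wt_def)

lemma PN_le_Hr: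
  assumes "SM r f" "finite F"
  shows "PN r F f \<le> Hr_norm r f"
proof -
  have "(\<Sum>n\<in>F. wt r n * fc_sq f n) \<le> infsum (\<lambda>n. wt r n * fc_sq f n) UNIV"
    using assms wfc_nonneg unfolding SM_def
    by (intro finite_sum_le_infsum) auto
  then show ?thesis unfolding PN_def Hr_norm_wt by (rule real_sqrt_le_mono)
qed

lemma Hr_le_PN:
  assumes "SM r f" "0 \<le> B" "\<And>F. finite F \<Longrightarrow> PN r F f \<le> B"
  shows "Hr_norm r f \<le> B"
proof -
  have "infsum (\<lambda>n. wt r n * fc_sq f n) UNIV \<le> B\<^sup>2"
  proof (rule infsum_le_finite_sums)
    show "(\<lambda>n. wt r n * fc_sq f n) summable_on UNIV" using assms(1) unfolding SM_def .
    fix F :: "int set" assume "finite F" "F \<subseteq> UNIV"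
    have nn: "0 \<le> (\<Sum>n\<in>F. wt r n * fc_sq f n)"
      by (rule wfc_sum_nonneg)
    have "sqrt (\<Sum>n\<in>F. wt r n * fc_sq f n) \<le> B" using assms(3)[OF \<open>finite F\<close>] unfolding PN_def .
    then have "(sqrt (\<Sum>n\<in>F. wt r n * fc_sq f n))\<^sup>2 \<le> B\<^sup>2"
      using nn by (intro power_mono) auto
    then show "(\<Sum>n\<in>F. wt r n * fc_sq f n) \<le> B\<^sup>2" using nn by simp
  qed
  then have "Hr_norm r f \<le> sqrt (B\<^sup>2)" unfolding Hr_norm_wt by (rule real_sqrt_le_mono)
  then show ?thesis using assms(2) by simp
qed

lemma PN_L2: "PN r F f = L2_set (\<lambda>(n,b). sqrt (wt r n) * cmod (CC f n b)) (F \<times> Basis)"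
proof -
  have "(\<Sum>n\<in>F. wt r n * fc_sq f n) = (\<Sum>n\<in>F. \<Sum>b\<in>Basis. (sqrt (wt r n) * cmod (CC f n b))\<^sup>2)"
    unfolding fc_sq_CC sum_distrib_left
    by (intro sum.cong refl) (simp add: power_mult_distrib less_imp_le[OF wt_pos])
  also have "\<dots> = (\<Sum>i\<in>F \<times> Basis. ((\<lambda>(n,b). sqrt (wt r n) * cmod (CC f n b)) i)\<^sup>2)"
    by (subst sum.cartesian_product) (simp add: case_prod_beta)
  finally show ?thesis unfolding PN_def L2_set_def by simp
qed

lemma PN_add:
  assumes "f absolutely_integrable_on {0..1}" "g absolutely_integrable_on {0..1}"
  shows "PN r F (\<lambda>x. f x + g x) \<le> PN r F f + PN r F g"
proof -
  have "PN r F (\<lambda>x. f x + g x) \<le> L2_set (\<lambda>i. (\<lambda>(n,b). sqrt (wt r n) * cmod (CC f n b)) i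
        + (\<lambda>(n,b). sqrt (wt r n) * cmod (CC g n b)) i) (F \<times> Basis)"
    unfolding PN_L2
  proof (rule L2_set_mono)
    fix i :: "int \<times> 'a" assume "i \<in> F \<times> Basis"
    obtain n b where i: "i = (n,b)" by force
    have "cmod (CC (\<lambda>x. f x + g x) n b) \<le> cmod (CC f n b) + cmod (CC g n b)"
      unfolding CC_add[OF assms] by (rule norm_triangle_ineq)
    then have "sqrt (wt r n) * cmod (CC (\<lambda>x. f x + g x) n b) \<le> sqrt (wt r n) * (cmod (CC f n b) + cmod (CC g n b))"
      by (rule mult_left_mono) (simp add: less_imp_le[OF wt_pos])
    then show "(\<lambda>(n,b). sqrt (wt r n) * cmod (CC (\<lambda>x. f x + g x) n b)) i
       \<le> (\<lambda>(n,b). sqrt (wt r n) * cmod (CC f n b)) i + (\<lambda>(n,b). sqrt (wt r n) * cmod (CC g n b)) i"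
      unfolding i by (simp add: distrib_left)
    show "0 \<le> (\<lambda>(n,b). sqrt (wt r n) * cmod (CC (\<lambda>x. f x + g x) n b)) i"
      unfolding i using less_imp_le[OF wt_pos[of r n]] by simp
  qed
  also have "\<dots> \<le> PN r F f + PN r F g"
    unfolding PN_L2 by (rule L2_set_triangle_ineq)
  finally show ?thesis .
qed

lemma PN_uminus: "PN r F (\<lambda>x. - f x) = PN r F f"
  unfolding PN_def fc_sq_CC CC_uminus by simp

definition IP :: "real \<Rightarrow> int set \<Rightarrow> (real \<Rightarrow> 'a::euclidean_space) \<Rightarrow> (real \<Rightarrow> 'a) \<Rightarrow> real" where
  "IP r F v u = (\<Sum>n\<in>F. \<Sum>b\<in>Basis. wt r n * Re (cnj (CC v n b) * CC u n b))"

lemma Re_cnj_self: "Re (cnj z * z) = (cmod z)\<^sup>2"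
proof -
  have "of_real ((cmod z)\<^sup>2) = z * cnj z" by (rule complex_norm_square)
  then have "Re (z * cnj z) = (cmod z)\<^sup>2" by (metis Re_complex_of_real)
  then show ?thesis by (simp add: mult.commute)
qed

lemma IP_self: "IP r F v v = (PN r F v)\<^sup>2"
proof -
  have "IP r F v v = (\<Sum>n\<in>F. wt r n * fc_sq v n)"
    unfolding IP_def fc_sq_CC Re_cnj_self sum_distrib_left ..
  moreover have "0 \<le> (\<Sum>n\<in>F. wt r n * fc_sq v n)"
    by (rule wfc_sum_nonneg)
  ultimately show ?thesis unfolding PN_def by simp
qed

lemma abs_Re_cnj_mult: "\<bar>Re (cnj x * y)\<bar> \<le> cmod x * cmod y"
  using abs_Re_le_cmod[of "cnj x * y"] by (simp add: norm_mult)

lemma IP_CS: "\<bar>IP r F v u\<bar> \<le> PN r F v * PN r F u"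
proof -
  let ?f = "\<lambda>(n,b). sqrt (wt r n) * cmod (CC v n b)"
  let ?g = "\<lambda>(n,b). sqrt (wt r n) * cmod (CC u n b)"
  have "IP r F v u = (\<Sum>i\<in>F \<times> Basis. (\<lambda>(n,b). wt r n * Re (cnj (CC v n b) * CC u n b)) i)"
    unfolding IP_def by (subst sum.cartesian_product) (simp add: case_prod_beta)
  then have "\<bar>IP r F v u\<bar> \<le> (\<Sum>i\<in>F \<times> Basis. \<bar>(\<lambda>(n,b). wt r n * Re (cnj (CC v n b) * CC u n b)) i\<bar>)"
    by (simp add: sum_abs)
  also have "\<dots> \<le> (\<Sum>i\<in>F \<times> Basis. \<bar>?f i\<bar> * \<bar>?g i\<bar>)"
  proof (rule sum_mono)
    fix i :: "int \<times> 'a" assume "i \<in> F \<times> Basis"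
    obtain n b where i: "i = (n,b)" by force
    have w: "0 \<le> wt r n" using wt_pos[of r n] by simp
    have "\<bar>wt r n * Re (cnj (CC v n b) * CC u n b)\<bar> = wt r n * \<bar>Re (cnj (CC v n b) * CC u n b)\<bar>"
      using w by (simp add: abs_mult)
    also have "\<dots> \<le> wt r n * (cmod (CC v n b) * cmod (CC u n b))"
      using w abs_Re_cnj_mult by (rule mult_left_mono[rotated])
    also have "\<dots> = \<bar>sqrt (wt r n) * cmod (CC v n b)\<bar> * \<bar>sqrt (wt r n) * cmod (CC u n b)\<bar>"
      using w by (simp add: abs_mult algebra_simps)
    finally show "\<bar>(\<lambda>(n,b). wt r n * Re (cnj (CC v n b) * CC u n b)) i\<bar> \<le> \<bar>?f i\<bar> * \<bar>?g i\<bar>"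
      unfolding i by simp
  qed
  also have "\<dots> \<le> L2_set ?f (F \<times> Basis) * L2_set ?g (F \<times> Basis)" by (rule L2_set_mult_ineq)
  finally show ?thesis unfolding PN_L2 .
qed

lemma IP_lin:
  assumes "f absolutely_integrable_on {0..1}" "g absolutely_integrable_on {0..1}"
    "h absolutely_integrable_on {0..1}"
  shows "IP r F v (\<lambda>x. c *\<^sub>R (f x - g x) - h x) = c * (IP r F v f - IP r F v g) - IP r F v h"
proof -
  have "IP r F v (\<lambda>x. c *\<^sub>R (f x - g x) - h x) = (\<Sum>n\<in>F. \<Sum>b\<in>Basis.
     c * (wt r n * Re (cnj (CC v n b) * CC f n b) - wt r n * Re (cnj (CC v n b) * CC g n b))
       - wt r n * Re (cnj (CC v n b) * CC h n b))"
    unfolding IP_def CC_lin[OF assms] by (intro sum.cong refl) (simp add: algebra_simps)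
  also have "\<dots> = c * (IP r F v f - IP r F v g) - IP r F v h"
    unfolding IP_def by (simp only: right_diff_distrib sum_subtractf sum_distrib_left)
  finally show ?thesis .
qed

lemma IP_diff:
  assumes "f absolutely_integrable_on {0..1}" "g absolutely_integrable_on {0..1}"
  shows "IP r F v (\<lambda>x. f x - g x) = IP r F v f - IP r F v g"
  unfolding IP_def CC_diff[OF assms]
  by (simp add: algebra_simps sum_subtractf)

lemma Hr_norm_scale: "Hr_norm r (\<lambda>x. c *\<^sub>R f x) = \<bar>c\<bar> * Hr_norm r f"
proof -
  have "infsum (\<lambda>n. wt r n * fc_sq (\<lambda>x. c *\<^sub>R f x) n) UNIV = c\<^sup>2 * infsum (\<lambda>n. wt r n * fc_sq f n) UNIV"
    unfolding fc_sq_scale by (simp add: algebra_simps flip: infsum_cmult_right')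
  then show ?thesis unfolding Hr_norm_wt by (simp add: real_sqrt_mult)
qed

lemma fc_sq_zero: "fc_sq (\<lambda>x. 0::'a::euclidean_space) n = 0"
  unfolding fc_sq_CC CC_zero by simp

lemma Hr_norm_zero: "Hr_norm r (\<lambda>x. 0::'a::euclidean_space) = 0"
  unfolding Hr_norm_wt fc_sq_zero by simp


lemma Hdot_sq_nonneg: "0 \<le> Hdot_sq r f"
  unfolding Hdot_sq_def by (intro infsum_nonneg mult_nonneg_nonneg fc_sq_nonneg) simp

lemma G_sq_nonneg: "0 \<le> G_sq r c h"
proof -
  let ?f = "\<lambda>\<theta>. (norm (h \<theta>))\<^sup>2 * norm (vector_derivative c (at \<theta>))"
  have "0 \<le> integral {0..1} ?f"
    by (cases "?f integrable_on {0..1}") (auto intro: integral_nonneg simp: not_integrable_integral)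
  moreover have "0 \<le> len c powr (1 - 2 * r) * Hdot_sq r (h \<circ> inv_into {0..1} (psi c))"
    by (intro mult_nonneg_nonneg Hdot_sq_nonneg) simp
  ultimately show ?thesis unfolding G_sq_def by simp
qed

lemma G_norm_nonneg: "0 \<le> G_norm r c h"
  unfolding G_norm_def using G_sq_nonneg by simp

lemma int_cmult: "f integrable_on S \<Longrightarrow> (\<lambda>x. c * f x) integrable_on S" for f :: "real \<Rightarrow> real"
  by (rule has_integral_integrable[OF has_integral_mult_right[OF integrable_integral]])

lemma IP_deriv:
  assumes hd: "H_has_deriv r \<gamma> D t S" and t: "t \<in> S"
    and ai: "\<And>s. s \<in> S \<Longrightarrow> \<gamma> s absolutely_integrable_on {0..1}"
    and sm: "\<And>s. s \<in> S \<Longrightarrow> SM r (\<gamma> s)"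
    and Dai: "D absolutely_integrable_on {0..1}" and Dsm: "SM r D"
    and F: "finite F"
  shows "((\<lambda>s. IP r F v (\<gamma> s)) has_real_derivative IP r F v D) (at t within S)"
proof -
  let ?q = "\<lambda>s. (\<lambda>\<theta>. (1/(s-t)) *\<^sub>R (\<gamma> s \<theta> - \<gamma> t \<theta>) - D \<theta>)"
  have lim: "((\<lambda>s. Hr_norm r (?q s)) \<longlongrightarrow> 0) (at t within S)"
    using hd unfolding H_has_deriv_def .
  have ev: "eventually (\<lambda>s. norm ((IP r F v (\<gamma> s) - IP r F v (\<gamma> t)) / (s - t) - IP r F v D)
      \<le> PN r F v * Hr_norm r (?q s)) (at t within S)"
    unfolding eventually_at_filter
  proof (rule always_eventually, intro allI impI)
    fix s assume st: "s \<noteq> t" "s \<in> S"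
    have eq: "(IP r F v (\<gamma> s) - IP r F v (\<gamma> t)) / (s - t) - IP r F v D = IP r F v (?q s)"
      using IP_lin[OF ai[OF st(2)] ai[OF t] Dai, of r F v "1/(s-t)"] by simp
    have smq: "SM r (?q s)"
      by (intro SM_diff ai_scale ai_diff ai sm SM_scale Dai Dsm st t)
    have "\<bar>IP r F v (?q s)\<bar> \<le> PN r F v * PN r F (?q s)" by (rule IP_CS)
    also have "\<dots> \<le> PN r F v * Hr_norm r (?q s)"
      by (intro mult_left_mono PN_le_Hr smq F PN_nonneg)
    finally show "norm ((IP r F v (\<gamma> s) - IP r F v (\<gamma> t)) / (s - t) - IP r F v D)
      \<le> PN r F v * Hr_norm r (?q s)" unfolding eq by simp
  qed
  have "((\<lambda>s. (IP r F v (\<gamma> s) - IP r F v (\<gamma> t)) / (s - t) - IP r F v D) \<longlongrightarrow> 0) (at t within S)"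
    by (rule Lim_null_comparison[OF ev]) (rule tendsto_mult_right_zero[OF lim])
  then show ?thesis unfolding has_field_derivative_iff by (rule LIM_zero_cancel)
qed

lemma Imm_in_H: "Imm r c \<Longrightarrow> in_H r c"
  unfolding Imm_def by simp

lemma piece_bound:
  assumes ab: "a < b"
    and hyp: "\<forall>c\<in>ballG r c0 R. \<forall>h. in_H r h \<longrightarrow>
           (1 / \<alpha>) * Hr_norm r h \<le> G_norm r c h \<and> G_norm r c h \<le> \<alpha> * Hr_norm r h"
    and apos: "\<alpha> > 0"
    and ball: "\<forall>t\<in>{a..b}. \<gamma> t \<in> ballG r c0 R"
    and imm: "\<forall>t\<in>{a..b}. Imm r (\<gamma> t)"
    and D': "\<forall>t\<in>{a..b}. in_H r (D' t) \<and> H_has_deriv r \<gamma> (D' t) t {a..b}"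
    and DD: "\<forall>t\<in>{a<..<b}. D t = D' t"
    and int: "(\<lambda>t. G_norm r (\<gamma> t) (D t)) integrable_on {a..b}"
    and F: "finite F"
  shows "IP r F v (\<gamma> b) - IP r F v (\<gamma> a) \<le> integral {a..b} (\<lambda>t. PN r F v * \<alpha> * G_norm r (\<gamma> t) (D t))"
proof -
  let ?G = "\<lambda>t. PN r F v * \<alpha> * G_norm r (\<gamma> t) (D t)"
  let ?p = "\<lambda>t. IP r F v (D' t)"
  have ftc: "(?p has_integral IP r F v (\<gamma> b) - IP r F v (\<gamma> a)) {a..b}"
  proof (rule fundamental_theorem_of_calculus)
    show "a \<le> b" using ab by simp
    fix x assume x: "x \<in> {a..b}"
    have "((\<lambda>s. IP r F v (\<gamma> s)) has_real_derivative IP r F v (D' x)) (at x within {a..b})"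
    proof (rule IP_deriv[OF _ x])
      show "H_has_deriv r \<gamma> (D' x) x {a..b}" using D' x by blast
      show "D' x absolutely_integrable_on {0..1}" "SM r (D' x)" using D' x in_H_AI in_H_SM by blast+
      show "\<gamma> s absolutely_integrable_on {0..1}" "SM r (\<gamma> s)" if "s \<in> {a..b}" for s
        using imm that Imm_in_H in_H_AI in_H_SM by blast+
    qed (rule F)
    then show "((\<lambda>s. IP r F v (\<gamma> s)) has_vector_derivative ?p x) (at x within {a..b})"
      by (simp add: has_real_derivative_iff_has_vector_derivative)
  qed
  let ?h = "\<lambda>t. if t \<in> {a<..<b} then ?p t else ?G t"
  have hi: "(?h has_integral IP r F v (\<gamma> b) - IP r F v (\<gamma> a)) {a..b}"
    by (rule has_integral_spike_finite[of "{a,b}", OF _ _ ftc]) auto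
  have Gi: "(?G has_integral integral {a..b} ?G) {a..b}"
    using int by (intro integrable_integral int_cmult)
  show ?thesis
  proof (rule has_integral_le[OF hi Gi])
    fix x assume x: "x \<in> {a..b}"
    show "?h x \<le> ?G x"
    proof (cases "x \<in> {a<..<b}")
      case True
      have Dx: "in_H r (D' x)" using D' x by simp
      have Hr: "Hr_norm r (D' x) \<le> \<alpha> * G_norm r (\<gamma> x) (D' x)"
      proof -
        have "(1 / \<alpha>) * Hr_norm r (D' x) \<le> G_norm r (\<gamma> x) (D' x)"
          using hyp ball x Dx by blast
        then have "\<alpha> * ((1 / \<alpha>) * Hr_norm r (D' x)) \<le> \<alpha> * G_norm r (\<gamma> x) (D' x)"
          using apos by (intro mult_left_mono) auto
        then show ?thesis using apos by simp
      qed
      have "?p x \<le> \<bar>?p x\<bar>" by simp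
      also have "\<dots> \<le> PN r F v * PN r F (D' x)" by (rule IP_CS)
      also have "\<dots> \<le> PN r F v * Hr_norm r (D' x)"
        by (intro mult_left_mono PN_le_Hr in_H_SM Dx F PN_nonneg)
      also have "\<dots> \<le> PN r F v * (\<alpha> * G_norm r (\<gamma> x) (D' x))"
        by (intro mult_left_mono Hr PN_nonneg)
      finally show ?thesis using True DD by simp
    next
      case False then show ?thesis by (simp only: if_not_P[OF False] if_False order_refl)
    qed
  qed
qed

lemma telescope:
  fixes \<phi> g :: "real \<Rightarrow> real" and K :: "real set"
  assumes K: "finite K" "{0,1} \<subseteq> K" "K \<subseteq> {0..1}" and g: "g integrable_on {0..1}"
    and step: "\<And>a b. a \<in> K \<Longrightarrow> b \<in> K \<Longrightarrow> a < b \<Longrightarrow> {a<..<b} \<inter> K = {} \<Longrightarrow>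
       \<phi> b - \<phi> a \<le> integral {a..b} g"
  shows "\<phi> 1 - \<phi> 0 \<le> integral {0..1} g"
proof -
  have "\<forall>x\<in>K. card {k\<in>K. k < x} = n \<longrightarrow> \<phi> x - \<phi> 0 \<le> integral {0..x} g" for n
  proof (induction n rule: less_induct)
    case (less n)
    show ?case
    proof (intro ballI impI)
      fix x assume x: "x \<in> K" and cn: "card {k\<in>K. k < x} = n"
      have x01: "0 \<le> x" "x \<le> 1" using x K by auto
      show "\<phi> x - \<phi> 0 \<le> integral {0..x} g"
      proof (cases "x = 0")
        case True then show ?thesis by simp
      next
        case False
        then have xp: "0 < x" using x01 by simp
        let ?L = "{k\<in>K. k < x}"
        have Lf: "finite ?L" using K by simp
        have Lne: "0 \<in> ?L" using K xp by auto
        define a where "a = Max ?L"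
        have aL: "a \<in> ?L" unfolding a_def using Lf Lne by (intro Max_in) auto
        have amax: "\<And>k. k \<in> ?L \<Longrightarrow> k \<le> a" unfolding a_def using Lf by simp
        have aK: "a \<in> K" and ax: "a < x" using aL by auto
        have a0: "0 \<le> a" using aK K by auto
        have empty: "{a<..<x} \<inter> K = {}"
          using amax by force
        have sub: "{k\<in>K. k < a} \<subset> ?L" using aL ax by auto
        have "card {k\<in>K. k < a} < n" using psubset_card_mono[OF Lf sub] cn by simp
        then have IH: "\<phi> a - \<phi> 0 \<le> integral {0..a} g" using less.IH aK by blast
        have st: "\<phi> x - \<phi> a \<le> integral {a..x} g" using step[OF aK x ax empty] .
        have gx: "g integrable_on {0..x}" using integrable_subinterval_real[OF g, of 0 x] x01 by auto
        have "integral {0..a} g + integral {a..x} g = integral {0..x} g"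
          using Henstock_Kurzweil_Integration.integral_combine[of 0 a x g] a0 ax gx by simp
        then show ?thesis using IH st by linarith
      qed
    qed
  qed
  then show ?thesis using K by auto
qed

lemma path_len_nonneg:
  "(\<lambda>t. G_norm r (\<gamma> t) (D t)) integrable_on {0..1} \<Longrightarrow> 0 \<le> path_len r \<gamma> D"
  unfolding path_len_def by (intro integral_nonneg G_norm_nonneg)

lemma main_bound:
  assumes hyp: "\<forall>c\<in>ballG r c0 R. \<forall>h. in_H r h \<longrightarrow>
           (1 / \<alpha>) * Hr_norm r h \<le> G_norm r c h \<and> G_norm r c h \<le> \<alpha> * Hr_norm r h"
    and apos: "\<alpha> > 0"
    and P: "pw_C1_path r \<gamma> D" and I: "(\<lambda>t. G_norm r (\<gamma> t) (D t)) integrable_on {0..1}"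
    and ball: "\<forall>t\<in>{0..1}. \<gamma> t \<in> ballG r c0 R" and F: "finite F"
  shows "PN r F (\<lambda>\<theta>. \<gamma> 1 \<theta> - \<gamma> 0 \<theta>) \<le> \<alpha> * path_len r \<gamma> D"
proof -
  define v where "v = (\<lambda>\<theta>. \<gamma> 1 \<theta> - \<gamma> 0 \<theta>)"
  have imm: "\<forall>t\<in>{0..1}. Imm r (\<gamma> t)" using P unfolding pw_C1_path_def by simp
  obtain K where K: "finite K" "{0, 1} \<subseteq> K" "K \<subseteq> {0..1}"
    and pieces: "\<And>a b. a\<in>K \<Longrightarrow> b\<in>K \<Longrightarrow> a < b \<Longrightarrow> {a<..<b} \<inter> K = {} \<Longrightarrow>
           (\<exists>D'. (\<forall>t\<in>{a..b}. in_H r (D' t) \<and> H_has_deriv r \<gamma> (D' t) t {a..b})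
                 \<and> H_continuous_on r {a..b} D'
                 \<and> (\<forall>t\<in>{a<..<b}. D t = D' t))"
    using P unfolding pw_C1_path_def by metis
  let ?g = "\<lambda>t. PN r F v * \<alpha> * G_norm r (\<gamma> t) (D t)"
  have tel: "IP r F v (\<gamma> 1) - IP r F v (\<gamma> 0) \<le> integral {0..1} ?g"
  proof (rule telescope[OF K])
    show "?g integrable_on {0..1}" using I by (rule int_cmult)
    fix a b assume ab: "a \<in> K" "b \<in> K" "a < b" "{a<..<b} \<inter> K = {}"
    obtain D' where D': "\<forall>t\<in>{a..b}. in_H r (D' t) \<and> H_has_deriv r \<gamma> (D' t) t {a..b}"
      and DD: "\<forall>t\<in>{a<..<b}. D t = D' t" using pieces[OF ab] by blast
    have sub: "{a..b} \<subseteq> {0..1}" using ab K by auto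
    show "IP r F v (\<gamma> b) - IP r F v (\<gamma> a) \<le> integral {a..b} ?g"
    proof (rule piece_bound[OF ab(3) hyp apos _ _ D' DD _ F])
      show "\<forall>t\<in>{a..b}. \<gamma> t \<in> ballG r c0 R" using ball sub by blast
      show "\<forall>t\<in>{a..b}. Imm r (\<gamma> t)" using imm sub by blast
      show "(\<lambda>t. G_norm r (\<gamma> t) (D t)) integrable_on {a..b}"
        by (rule integrable_subinterval_real[OF I sub])
    qed
  qed
  have ai: "\<gamma> t absolutely_integrable_on {0..1}" if "t \<in> {0..1}" for t
    using imm that by (meson Imm_in_H in_H_AI)
  have eq1: "IP r F v (\<gamma> 1) - IP r F v (\<gamma> 0) = (PN r F v)\<^sup>2"
    unfolding IP_self[symmetric] v_def
    by (rule IP_diff[symmetric, OF ai ai]) auto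
  have eq2: "integral {0..1} ?g = PN r F v * \<alpha> * path_len r \<gamma> D"
    unfolding path_len_def by (rule integral_mult_right)
  have "PN r F v * PN r F v \<le> PN r F v * \<alpha> * path_len r \<gamma> D"
    using tel unfolding eq1 eq2 by (simp add: power2_eq_square)
  then have le: "PN r F v * PN r F v \<le> PN r F v * (\<alpha> * path_len r \<gamma> D)"
    by (simp add: mult.assoc)
  have L: "0 \<le> \<alpha> * path_len r \<gamma> D" using apos path_len_nonneg[OF I] by simp
  have "PN r F v \<le> \<alpha> * path_len r \<gamma> D"
  proof (cases "PN r F v = 0")
    case True then show ?thesis using L by simp
  next
    case False
    then have "PN r F v > 0" using PN_nonneg[of r F v] by simp
    then show ?thesis using le by simp
  qed
  then show ?thesis unfolding v_def .
qed


definition pwc :: "real \<Rightarrow> real \<Rightarrow> real \<Rightarrow> (real \<Rightarrow> real \<Rightarrow> 'a::euclidean_space) \<Rightarrow> (real \<Rightarrow> real \<Rightarrow> 'a) \<Rightarrow> bool" where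
  "pwc r u v \<gamma> D \<longleftrightarrow> (\<forall>t\<in>{u..v}. Imm r (\<gamma> t)) \<and>
     (\<exists>K. finite K \<and> {u, v} \<subseteq> K \<and> K \<subseteq> {u..v} \<and>
        (\<forall>a\<in>K. \<forall>b\<in>K. a < b \<and> {a<..<b} \<inter> K = {} \<longrightarrow>
           (\<exists>D'. (\<forall>t\<in>{a..b}. in_H r (D' t) \<and> H_has_deriv r \<gamma> (D' t) t {a..b})
                 \<and> H_continuous_on r {a..b} D'
                 \<and> (\<forall>t\<in>{a<..<b}. D t = D' t))))"

lemma pw_pwc: "pw_C1_path r \<gamma> D = pwc r 0 1 \<gamma> D"
  unfolding pw_C1_path_def pwc_def by simp

lemma SM_iff: "SM r f \<longleftrightarrow> (\<lambda>n. (1 + (real_of_int n)\<^sup>2) powr r * fc_sq f n) summable_on UNIV"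
  by (simp add: SM_def wt_def)

lemma in_H_scale:
  assumes "in_H r f"
  shows "in_H r (\<lambda>x. c *\<^sub>R f x)"
proof -
  have p: "\<forall>x. f (x + 1) = f x" and ai: "f absolutely_integrable_on {0..1}"
    and n2: "(\<lambda>x. (norm (f x))\<^sup>2) integrable_on {0..1}" and sm: "SM r f"
    using assms unfolding in_H_def SM_iff by auto
  have "(\<lambda>x. c\<^sup>2 * (norm (f x))\<^sup>2) integrable_on {0..1}" using n2 by (rule int_cmult)
  then have "(\<lambda>x. (norm (c *\<^sub>R f x))\<^sup>2) integrable_on {0..1}"
    by (simp add: power_mult_distrib)
  then show ?thesis using p ai_scale[OF ai] SM_scale[OF sm] unfolding in_H_def SM_iff by simp
qed

lemma in_H_zero: "in_H r (\<lambda>x. 0::'a::euclidean_space)"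
  unfolding in_H_def using ai0 by (simp add: fc_sq_zero integrable_0)

lemma tendsto_affine_within:
  fixes g :: "real \<Rightarrow> real"
  assumes g: "(g \<longlongrightarrow> 0) (at (p + m * t) within T)" and m: "m > 0"
    and S: "\<And>y. y \<in> S \<Longrightarrow> (p + m * y) \<in> T"
  shows "((\<lambda>y. g (p + m * y)) \<longlongrightarrow> 0) (at t within S)"
proof -
  have "filterlim (\<lambda>y. p + m * y) (at (p + m * t) within T) (at t within S)"
    unfolding filterlim_at
  proof
    show "eventually (\<lambda>y. (p + m * y) \<in> T \<and> p + m * y \<noteq> p + m * t) (at t within S)"
      unfolding eventually_at_filter using m S by (intro always_eventually) auto
    show "((\<lambda>y. p + m * y) \<longlongrightarrow> p + m * t) (at t within S)" by (intro tendsto_intros)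
  qed
  then show ?thesis by (rule filterlim_compose[OF g])
qed

lemma pwc_affine:
  assumes P: "pwc r u v \<gamma> D" and m: "m > 0" and uv': "u' < v'"
    and lo: "u \<le> p + m * u'" and hi: "p + m * v' \<le> v"
  shows "pwc r u' v' (\<lambda>s. \<gamma> (p + m * s)) (\<lambda>s \<theta>. m *\<^sub>R D (p + m * s) \<theta>)"
proof -
  define l where "l = (\<lambda>s::real. p + m * s)"
  have lmono: "l s \<le> l s' \<longleftrightarrow> s \<le> s'" for s s' unfolding l_def using m by simp
  have lmono2: "l s < l s' \<longleftrightarrow> s < s'" for s s' unfolding l_def using m by simp
  have lin: "s \<in> {u'..v'} \<Longrightarrow> l s \<in> {u..v}" for s
    using lo hi lmono[of u' s] lmono[of s v'] unfolding l_def by auto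
  have imm: "\<forall>t\<in>{u..v}. Imm r (\<gamma> t)" using P unfolding pwc_def by simp
  obtain K where K: "finite K" "{u, v} \<subseteq> K" "K \<subseteq> {u..v}"
    and pieces: "\<And>a b. a\<in>K \<Longrightarrow> b\<in>K \<Longrightarrow> a < b \<Longrightarrow> {a<..<b} \<inter> K = {} \<Longrightarrow>
           (\<exists>D'. (\<forall>t\<in>{a..b}. in_H r (D' t) \<and> H_has_deriv r \<gamma> (D' t) t {a..b})
                 \<and> H_continuous_on r {a..b} D'
                 \<and> (\<forall>t\<in>{a<..<b}. D t = D' t))"
    using P unfolding pwc_def by metis
  define K' where "K' = {u', v'} \<union> {s\<in>{u'..v'}. l s \<in> K}"
  have "{s\<in>{u'..v'}. l s \<in> K} \<subseteq> (\<lambda>k. (k - p) / m) ` K"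
  proof
    fix s assume "s \<in> {s\<in>{u'..v'}. l s \<in> K}"
    then have "l s \<in> K" "s = (l s - p) / m" unfolding l_def using m by auto
    then show "s \<in> (\<lambda>k. (k - p) / m) ` K" by blast
  qed
  then have fK': "finite K'" unfolding K'_def using K(1) finite_subset by auto
  have K'sub: "K' \<subseteq> {u'..v'}" unfolding K'_def using uv' by auto
  have main: "\<exists>D'. (\<forall>t\<in>{a..b}. in_H r (D' t) \<and> H_has_deriv r (\<lambda>s. \<gamma> (p + m * s)) (D' t) t {a..b})
                 \<and> H_continuous_on r {a..b} D'
                 \<and> (\<forall>t\<in>{a<..<b}. (\<lambda>\<theta>. m *\<^sub>R D (p + m * t) \<theta>) = D' t)"
    if ab: "a \<in> K'" "b \<in> K'" "a < b" "{a<..<b} \<inter> K' = {}" for a b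
  proof -
    have ab01: "a \<in> {u'..v'}" "b \<in> {u'..v'}" using ab K'sub by auto
    define A where "A = l a"
    define B where "B = l b"
    have AB: "A < B" unfolding A_def B_def using ab lmono2 by simp
    have Auv: "A \<in> {u..v}" "B \<in> {u..v}" unfolding A_def B_def using lin ab01 by auto
    let ?La = "{k\<in>K. k \<le> A}"
    let ?Lb = "{k\<in>K. B \<le> k}"
    have La: "finite ?La" "u \<in> ?La" using K Auv by auto
    have Lb: "finite ?Lb" "v \<in> ?Lb" using K Auv by auto
    define a0 where "a0 = Max ?La"
    define b0 where "b0 = Min ?Lb"
    have "a0 \<in> ?La" unfolding a0_def using La by (intro Max_in) auto
    then have a0: "a0 \<in> K" "a0 \<le> A" by auto
    have "b0 \<in> ?Lb" unfolding b0_def using Lb by (intro Min_in) auto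
    then have b0: "b0 \<in> K" "B \<le> b0" by auto
    have a0max: "\<And>k. k \<in> K \<Longrightarrow> k \<le> A \<Longrightarrow> k \<le> a0" unfolding a0_def using La by simp
    have b0min: "\<And>k. k \<in> K \<Longrightarrow> B \<le> k \<Longrightarrow> b0 \<le> k" unfolding b0_def using Lb by simp
    have a0b0: "a0 < b0" using a0 b0 AB by simp
    have empty: "{a0<..<b0} \<inter> K = {}"
    proof (rule ccontr)
      assume "{a0<..<b0} \<inter> K \<noteq> {}"
      then obtain k where k: "k \<in> K" "a0 < k" "k < b0" by auto
      have "\<not> k \<le> A" using a0max[OF k(1)] k by force
      moreover have "\<not> B \<le> k" using b0min[OF k(1)] k by force
      ultimately have kAB: "A < k" "k < B" by auto
      define s where "s = (k - p) / m"
      have ls: "l s = k" unfolding s_def l_def using m by simp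
      have "a < s" "s < b" using kAB lmono2[of a s] lmono2[of s b] unfolding A_def B_def ls by auto
      then have "s \<in> {u'..v'}" using ab01 by auto
      then have "s \<in> K'" unfolding K'_def using ls k(1) by auto
      then show False using ab(4) \<open>a < s\<close> \<open>s < b\<close> by auto
    qed
    obtain D0 where D0: "\<forall>t\<in>{a0..b0}. in_H r (D0 t) \<and> H_has_deriv r \<gamma> (D0 t) t {a0..b0}"
      and D0c: "H_continuous_on r {a0..b0} D0" and D0e: "\<forall>t\<in>{a0<..<b0}. D t = D0 t"
      using pieces[OF a0(1) b0(1) a0b0 empty] by blast
    have lab: "s \<in> {a..b} \<Longrightarrow> l s \<in> {a0..b0}" for s
      using lmono[of a s] lmono[of s b] a0 b0 unfolding A_def B_def by auto
    have lab2: "s \<in> {a<..<b} \<Longrightarrow> l s \<in> {a0<..<b0}" for s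
      using lmono2[of a s] lmono2[of s b] a0 b0 unfolding A_def B_def by auto
    define D'' where "D'' = (\<lambda>s \<theta>. m *\<^sub>R D0 (l s) \<theta>)"
    show ?thesis
    proof (intro exI[of _ D''] conjI ballI)
      fix s assume s: "s \<in> {a..b}"
      show "in_H r (D'' s)" unfolding D''_def using D0 lab[OF s] by (intro in_H_scale) auto
      have hd: "H_has_deriv r \<gamma> (D0 (l s)) (l s) {a0..b0}" using D0 lab[OF s] by auto
      let ?g = "\<lambda>x. Hr_norm r (\<lambda>\<theta>. (1 / (x - l s)) *\<^sub>R (\<gamma> x \<theta> - \<gamma> (l s) \<theta>) - D0 (l s) \<theta>)"
      have g: "(?g \<longlongrightarrow> 0) (at (p + m * s) within {a0..b0})" using hd unfolding H_has_deriv_def l_def .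
      have "((\<lambda>x. ?g (p + m * x)) \<longlongrightarrow> 0) (at s within {a..b})"
        by (rule tendsto_affine_within[OF g m]) (use lab in \<open>auto simp: l_def\<close>)
      then have lim: "((\<lambda>x. m * ?g (p + m * x)) \<longlongrightarrow> 0) (at s within {a..b})"
        by (rule tendsto_mult_right_zero)
      have eq: "Hr_norm r (\<lambda>\<theta>. (1 / (x - s)) *\<^sub>R (\<gamma> (p + m * x) \<theta> - \<gamma> (p + m * s) \<theta>) - D'' s \<theta>)
          = m * ?g (p + m * x)" for x
      proof -
        have d: "p + m * x - l s = m * (x - s)" unfolding l_def by (simp add: algebra_simps)
        have mc: "m * (1 / (p + m * x - l s)) = 1 / (x - s)" unfolding d using m by simp
        have "(\<lambda>\<theta>. (1 / (x - s)) *\<^sub>R (\<gamma> (p + m * x) \<theta> - \<gamma> (p + m * s) \<theta>) - D'' s \<theta>)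
            = (\<lambda>\<theta>. m *\<^sub>R ((1 / (p + m * x - l s)) *\<^sub>R (\<gamma> (p + m * x) \<theta> - \<gamma> (l s) \<theta>) - D0 (l s) \<theta>))"
          unfolding D''_def scaleR_diff_right scaleR_scaleR mc by (simp add: l_def)
        then show ?thesis using m by (simp add: Hr_norm_scale)
      qed
      show "H_has_deriv r (\<lambda>s. \<gamma> (p + m * s)) (D'' s) s {a..b}"
        unfolding H_has_deriv_def eq using lim .
    next
      show "H_continuous_on r {a..b} D''"
        unfolding H_continuous_on_def
      proof
        fix s assume s: "s \<in> {a..b}"
        let ?g = "\<lambda>x. Hr_norm r (\<lambda>\<theta>. D0 x \<theta> - D0 (l s) \<theta>)"
        have g: "(?g \<longlongrightarrow> 0) (at (p + m * s) within {a0..b0})"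
          using D0c lab[OF s] unfolding H_continuous_on_def l_def by blast
        have "((\<lambda>x. ?g (p + m * x)) \<longlongrightarrow> 0) (at s within {a..b})"
          by (rule tendsto_affine_within[OF g m]) (use lab in \<open>auto simp: l_def\<close>)
        then have lim: "((\<lambda>x. m * ?g (p + m * x)) \<longlongrightarrow> 0) (at s within {a..b})"
          by (rule tendsto_mult_right_zero)
        have eq: "Hr_norm r (\<lambda>\<theta>. D'' x \<theta> - D'' s \<theta>) = m * ?g (p + m * x)" for x
        proof -
          have "(\<lambda>\<theta>. D'' x \<theta> - D'' s \<theta>) = (\<lambda>\<theta>. m *\<^sub>R (D0 (p + m * x) \<theta> - D0 (l s) \<theta>))"
            unfolding D''_def by (simp add: l_def scaleR_diff_right)
          then show ?thesis using m by (simp add: Hr_norm_scale)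
        qed
        show "((\<lambda>x. Hr_norm r (\<lambda>\<theta>. D'' x \<theta> - D'' s \<theta>)) \<longlongrightarrow> 0) (at s within {a..b})"
          unfolding eq using lim .
      qed
    next
      fix s assume s: "s \<in> {a<..<b}"
      show "(\<lambda>\<theta>. m *\<^sub>R D (p + m * s) \<theta>) = D'' s"
        unfolding D''_def using D0e lab2[OF s] by (simp add: l_def)
    qed
  qed
  have imm': "\<forall>t\<in>{u'..v'}. Imm r (\<gamma> (p + m * t))"
  proof
    fix t assume "t \<in> {u'..v'}"
    then have "l t \<in> {u..v}" by (rule lin)
    then have "Imm r (\<gamma> (l t))" using imm by blast
    then show "Imm r (\<gamma> (p + m * t))" unfolding l_def .
  qed
  have sub: "{u', v'} \<subseteq> K'" unfolding K'_def by auto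
  have pieces': "\<forall>a\<in>K'. \<forall>b\<in>K'. a < b \<and> {a<..<b} \<inter> K' = {} \<longrightarrow>
           (\<exists>D'. (\<forall>t\<in>{a..b}. in_H r (D' t) \<and> H_has_deriv r (\<lambda>s. \<gamma> (p + m * s)) (D' t) t {a..b})
                 \<and> H_continuous_on r {a..b} D'
                 \<and> (\<forall>t\<in>{a<..<b}. (\<lambda>\<theta>. m *\<^sub>R D (p + m * t) \<theta>) = D' t))"
  proof (intro ballI impI)
    fix a b assume "a \<in> K'" "b \<in> K'" "a < b \<and> {a<..<b} \<inter> K' = {}"
    then show "\<exists>D'. (\<forall>t\<in>{a..b}. in_H r (D' t) \<and> H_has_deriv r (\<lambda>s. \<gamma> (p + m * s)) (D' t) t {a..b})
                 \<and> H_continuous_on r {a..b} D'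
                 \<and> (\<forall>t\<in>{a<..<b}. (\<lambda>\<theta>. m *\<^sub>R D (p + m * t) \<theta>) = D' t)"
      using main[of a b] by simp
  qed
  show ?thesis
    unfolding pwc_def
    by (intro conjI imm' exI[of _ K'] fK' sub K'sub pieces')
qed


lemma H_has_deriv_cong:
  assumes hd: "H_has_deriv r \<gamma> D t S" and t: "t \<in> S" and eq: "\<And>s. s \<in> S \<Longrightarrow> \<gamma>' s = \<gamma> s"
  shows "H_has_deriv r \<gamma>' D t S"
  unfolding H_has_deriv_def
proof (rule Lim_transform_eventually[OF hd[unfolded H_has_deriv_def]])
  show "eventually (\<lambda>s. Hr_norm r (\<lambda>\<theta>. (1 / (s - t)) *\<^sub>R (\<gamma> s \<theta> - \<gamma> t \<theta>) - D \<theta>) =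
      Hr_norm r (\<lambda>\<theta>. (1 / (s - t)) *\<^sub>R (\<gamma>' s \<theta> - \<gamma>' t \<theta>) - D \<theta>)) (at t within S)"
    unfolding eventually_at_filter using eq t by (intro always_eventually) auto
qed

lemma pwc_concat:
  assumes P1: "pwc r u v \<gamma>1 D1" and P2: "pwc r v w \<gamma>2 D2" and eq: "\<gamma>1 v = \<gamma>2 v"
  shows "pwc r u w (\<lambda>s. if s \<le> v then \<gamma>1 s else \<gamma>2 s) (\<lambda>s. if s \<le> v then D1 s else D2 s)"
proof -
  obtain K1 where K1: "finite K1" "{u, v} \<subseteq> K1" "K1 \<subseteq> {u..v}"
    and pc1: "\<And>a b. a\<in>K1 \<Longrightarrow> b\<in>K1 \<Longrightarrow> a < b \<Longrightarrow> {a<..<b} \<inter> K1 = {} \<Longrightarrow>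
           (\<exists>D'. (\<forall>t\<in>{a..b}. in_H r (D' t) \<and> H_has_deriv r \<gamma>1 (D' t) t {a..b})
                 \<and> H_continuous_on r {a..b} D'
                 \<and> (\<forall>t\<in>{a<..<b}. D1 t = D' t))"
    using P1 unfolding pwc_def by metis
  have imm1: "\<forall>t\<in>{u..v}. Imm r (\<gamma>1 t)" using P1 unfolding pwc_def by simp
  obtain K2 where K2: "finite K2" "{v, w} \<subseteq> K2" "K2 \<subseteq> {v..w}"
    and pc2: "\<And>a b. a\<in>K2 \<Longrightarrow> b\<in>K2 \<Longrightarrow> a < b \<Longrightarrow> {a<..<b} \<inter> K2 = {} \<Longrightarrow>
           (\<exists>D'. (\<forall>t\<in>{a..b}. in_H r (D' t) \<and> H_has_deriv r \<gamma>2 (D' t) t {a..b})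
                 \<and> H_continuous_on r {a..b} D'
                 \<and> (\<forall>t\<in>{a<..<b}. D2 t = D' t))"
    using P2 unfolding pwc_def by metis
  have imm2: "\<forall>t\<in>{v..w}. Imm r (\<gamma>2 t)" using P2 unfolding pwc_def by simp
  have uv: "u \<le> v" "v \<le> w" using K1 K2 by auto
  define K where "K = K1 \<union> K2"
  have vK: "v \<in> K" using K1 unfolding K_def by auto
  have pieces: "\<exists>D'. (\<forall>t\<in>{a..b}. in_H r (D' t) \<and>
        H_has_deriv r (\<lambda>s. if s \<le> v then \<gamma>1 s else \<gamma>2 s) (D' t) t {a..b})
      \<and> H_continuous_on r {a..b} D'
      \<and> (\<forall>t\<in>{a<..<b}. (if t \<le> v then D1 t else D2 t) = D' t)"
    if ab: "a \<in> K" "b \<in> K" "a < b" "{a<..<b} \<inter> K = {}" for a b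
  proof (cases "b \<le> v")
    case True
    have a1: "a \<in> K1"
    proof (rule ccontr)
      assume "a \<notin> K1" then have "a \<in> K2" using ab unfolding K_def by auto
      then show False using K2 True ab(3) by auto
    qed
    have b1: "b \<in> K1"
    proof (rule ccontr)
      assume "b \<notin> K1" then have "b \<in> K2" using ab unfolding K_def by auto
      then have "b = v" using K2 True by auto
      then show False using \<open>b \<notin> K1\<close> K1 by auto
    qed
    have e1: "{a<..<b} \<inter> K1 = {}" using ab(4) unfolding K_def by auto
    obtain D' where D': "\<forall>t\<in>{a..b}. in_H r (D' t) \<and> H_has_deriv r \<gamma>1 (D' t) t {a..b}"
      and c: "H_continuous_on r {a..b} D'" and e: "\<forall>t\<in>{a<..<b}. D1 t = D' t"
      using pc1[OF a1 b1 ab(3) e1] by blast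
    show ?thesis
    proof (intro exI[of _ D'] conjI ballI)
      fix t assume t: "t \<in> {a..b}"
      show "in_H r (D' t)" using D' t by blast
      show "H_has_deriv r (\<lambda>s. if s \<le> v then \<gamma>1 s else \<gamma>2 s) (D' t) t {a..b}"
        by (rule H_has_deriv_cong[of r \<gamma>1]) (use D' t True in auto)
    next
      show "H_continuous_on r {a..b} D'" by (rule c)
    next
      fix t assume "t \<in> {a<..<b}"
      then show "(if t \<le> v then D1 t else D2 t) = D' t" using e True by auto
    qed
  next
    case False
    have av: "v \<le> a"
    proof (rule ccontr)
      assume "\<not> v \<le> a"
      then have "v \<in> {a<..<b} \<inter> K" using vK False by auto
      then show False using ab(4) by auto
    qed
    have a2: "a \<in> K2"
    proof (rule ccontr)
      assume "a \<notin> K2" then have "a \<in> K1" using ab unfolding K_def by auto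
      then have "a = v" using K1 av by auto
      then show False using \<open>a \<notin> K2\<close> K2 by auto
    qed
    have b2: "b \<in> K2"
    proof (rule ccontr)
      assume "b \<notin> K2" then have "b \<in> K1" using ab unfolding K_def by auto
      then show False using K1 False by auto
    qed
    have e2: "{a<..<b} \<inter> K2 = {}" using ab(4) unfolding K_def by auto
    obtain D' where D': "\<forall>t\<in>{a..b}. in_H r (D' t) \<and> H_has_deriv r \<gamma>2 (D' t) t {a..b}"
      and c: "H_continuous_on r {a..b} D'" and e: "\<forall>t\<in>{a<..<b}. D2 t = D' t"
      using pc2[OF a2 b2 ab(3) e2] by blast
    show ?thesis
    proof (intro exI[of _ D'] conjI ballI)
      fix t assume t: "t \<in> {a..b}"
      show "in_H r (D' t)" using D' t by blast
      show "H_has_deriv r (\<lambda>s. if s \<le> v then \<gamma>1 s else \<gamma>2 s) (D' t) t {a..b}"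
      proof (rule H_has_deriv_cong[of r \<gamma>2])
        show "H_has_deriv r \<gamma>2 (D' t) t {a..b}" using D' t by blast
        show "t \<in> {a..b}" by (rule t)
        fix s assume "s \<in> {a..b}"
        then have vs: "v \<le> s" using av by auto
        show "(if s \<le> v then \<gamma>1 s else \<gamma>2 s) = \<gamma>2 s"
        proof (cases "s \<le> v")
          case True then have "s = v" using vs by simp
          then show ?thesis using eq by simp
        qed simp
      qed
    next
      show "H_continuous_on r {a..b} D'" by (rule c)
    next
      fix t assume "t \<in> {a<..<b}"
      then show "(if t \<le> v then D1 t else D2 t) = D' t" using e av by auto
    qed
  qed
  have pieces': "\<forall>a\<in>K. \<forall>b\<in>K. a < b \<and> {a<..<b} \<inter> K = {} \<longrightarrow>
      (\<exists>D'. (\<forall>t\<in>{a..b}. in_H r (D' t) \<and>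
        H_has_deriv r (\<lambda>s. if s \<le> v then \<gamma>1 s else \<gamma>2 s) (D' t) t {a..b})
      \<and> H_continuous_on r {a..b} D'
      \<and> (\<forall>t\<in>{a<..<b}. (if t \<le> v then D1 t else D2 t) = D' t))"
    using pieces by blast
  have imm: "\<forall>t\<in>{u..w}. Imm r (if t \<le> v then \<gamma>1 t else \<gamma>2 t)"
    using imm1 imm2 by auto
  have fK: "finite K" using K1 K2 unfolding K_def by simp
  have sK: "{u, w} \<subseteq> K" using K1 K2 unfolding K_def by auto
  have Ks: "K \<subseteq> {u..w}" using K1 K2 uv unfolding K_def by auto
  show ?thesis unfolding pwc_def
    by (intro conjI imm exI[of _ K] fK sK Ks pieces')
qed

lemma G_norm_zero: "G_norm r c (\<lambda>\<theta>. 0::'a::euclidean_space) = 0"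
  unfolding G_norm_def G_sq_def Hdot_sq_def by (simp add: o_def fc_sq_zero)

lemma pwc_const:
  assumes "Imm r c"
  shows "pwc r 0 1 (\<lambda>_. c) (\<lambda>_ _. 0::'a::euclidean_space)"
proof -
  have hd: "H_has_deriv r (\<lambda>_. c) (\<lambda>\<theta>. 0) t S" for t S
    unfolding H_has_deriv_def by (simp add: Hr_norm_zero)
  have hc: "H_continuous_on r S (\<lambda>_ \<theta>. 0::'a)" for S
    unfolding H_continuous_on_def by (simp add: Hr_norm_zero)
  have gen: "(\<forall>t\<in>{a..b}. in_H r ((\<lambda>_ \<theta>. 0::'a) t) \<and> H_has_deriv r (\<lambda>_. c) ((\<lambda>_ \<theta>. 0::'a) t) t {a..b})
      \<and> H_continuous_on r {a..b} (\<lambda>_ \<theta>. 0::'a)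
      \<and> (\<forall>t\<in>{a<..<b}. (\<lambda>\<theta>. 0::'a) = (\<lambda>_ \<theta>. 0::'a) t)" for a b
    using hd hc by (auto intro: in_H_zero)
  have pieces: "\<forall>a\<in>{0,1}. \<forall>b\<in>{0,1}. a < b \<and> {a<..<b} \<inter> {0,1} = {} \<longrightarrow>
      (\<exists>D'. (\<forall>t\<in>{a..b}. in_H r (D' t) \<and> H_has_deriv r (\<lambda>_. c) (D' t) t {a..b})
      \<and> H_continuous_on r {a..b} D'
      \<and> (\<forall>t\<in>{a<..<b}. (\<lambda>\<theta>. 0::'a) = D' t))"
    by (intro ballI impI exI[of _ "\<lambda>_ \<theta>. 0::'a"] gen)
  show ?thesis unfolding pwc_def
    by (intro conjI exI[of _ "{0,1}"] pieces) (auto simp: assms)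
qed

lemma Hdot_sq_scale: "Hdot_sq r (\<lambda>x. m *\<^sub>R f x) = m\<^sup>2 * Hdot_sq r f"
  unfolding Hdot_sq_def fc_sq_scale by (simp add: algebra_simps flip: infsum_cmult_right')

lemma G_norm_scale:
  assumes m: "m \<ge> 0"
  shows "G_norm r c (\<lambda>\<theta>. m *\<^sub>R h \<theta>) = m * G_norm r c h"
proof -
  have i: "integral {0..1} (\<lambda>\<theta>. (norm (m *\<^sub>R h \<theta>))\<^sup>2 * norm (vector_derivative c (at \<theta>)))
     = m\<^sup>2 * integral {0..1} (\<lambda>\<theta>. (norm (h \<theta>))\<^sup>2 * norm (vector_derivative c (at \<theta>)))"
    by (simp add: power_mult_distrib mult.assoc flip: integral_mult_right)
  have o: "(\<lambda>\<theta>. m *\<^sub>R h \<theta>) \<circ> inv_into {0..1} (psi c) = (\<lambda>x. m *\<^sub>R (h \<circ> inv_into {0..1} (psi c)) x)"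
    by (simp add: o_def)
  have h: "Hdot_sq r (\<lambda>x. m *\<^sub>R (h \<circ> inv_into {0..1} (psi c)) x) = m\<^sup>2 * Hdot_sq r (h \<circ> inv_into {0..1} (psi c))"
    by (rule Hdot_sq_scale)
  have "G_sq r c (\<lambda>\<theta>. m *\<^sub>R h \<theta>) = m\<^sup>2 * G_sq r c h"
    unfolding G_sq_def i o h by (simp add: algebra_simps)
  then show ?thesis unfolding G_norm_def using m by (simp add: real_sqrt_mult)
qed

lemma len_affine:
  fixes G :: "real \<Rightarrow> real"
  assumes I: "G integrable_on {A..B}" and m: "m > 0"
    and A: "A = p + m * u'" and B: "B = p + m * v'" and uv: "u' \<le> v'"
  shows "((\<lambda>s. m * G (p + m * s)) has_integral integral {A..B} G) {u'..v'}"
proof -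
  have Ii: "(G has_integral integral {A..B} G) (cbox A B)"
    using integrable_integral[OF I] unfolding box_real(2) .
  have AB: "A \<le> B" using A B uv m by (simp add: mult_left_mono)
  have f: "(\<lambda>x. (1 / m) *\<^sub>R x + -((1 / m) *\<^sub>R p)) = (\<lambda>x. (1 / m) * x + (- (p / m)))"
    by (auto simp: field_simps)
  have img: "(\<lambda>x. (1 / m) *\<^sub>R x + -((1 / m) *\<^sub>R p)) ` cbox A B = {u'..v'}"
    unfolding f box_real(2) image_affinity_atLeastAtMost using AB m A B by (simp add: field_simps)
  have "((\<lambda>x. G (m *\<^sub>R x + p)) has_integral (1 / (\<bar>m\<bar> ^ DIM(real))) *\<^sub>R integral {A..B} G) {u'..v'}"
    using has_integral_affinity[OF Ii, of m p] m unfolding img by simp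
  then have "((\<lambda>x. G (p + m * x)) has_integral (1 / m) * integral {A..B} G) {u'..v'}"
    using m by (simp add: add.commute)
  from has_integral_mult_right[OF this, of m] show ?thesis using m by simp
qed

lemma has_integral_concat:
  fixes f1 f2 :: "real \<Rightarrow> real"
  assumes "(f1 has_integral i1) {u..v}" "(f2 has_integral i2) {v..w}" "u \<le> v" "v \<le> w"
  shows "((\<lambda>s. if s \<le> v then f1 s else f2 s) has_integral i1 + i2) {u..w}"
proof (rule has_integral_combine[OF assms(3,4)])
  show "((\<lambda>s. if s \<le> v then f1 s else f2 s) has_integral i1) {u..v}"
    by (rule has_integral_spike_finite[of "{}", OF _ _ assms(1)]) auto
  show "((\<lambda>s. if s \<le> v then f1 s else f2 s) has_integral i2) {v..w}"
    by (rule has_integral_spike_finite[of "{v}", OF _ _ assms(2)]) auto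
qed

lemma distG_le:
  assumes "pw_C1_path r \<mu> E" "\<mu> 0 = x" "\<mu> 1 = y" "(\<lambda>t. G_norm r (\<mu> t) (E t)) integrable_on {0..1}"
  shows "distG r x y \<le> ereal (path_len r \<mu> E)"
  unfolding distG_def by (rule Inf_lower) (use assms in blast)


lemma ball_mem:
  assumes Pg: "pw_C1_path r \<gamma> D" and Ig: "(\<lambda>t. G_norm r (\<gamma> t) (D t)) integrable_on {0..1}"
    and Pb: "pw_C1_path r \<beta> E" and Ib: "(\<lambda>t. G_norm r (\<beta> t) (E t)) integrable_on {0..1}"
    and j: "\<gamma> 1 = \<beta> 0" and e: "\<beta> 1 = c0"
    and L: "path_len r \<gamma> D + path_len r \<beta> E < R" and t: "t \<in> {0..1}"
  shows "\<gamma> t \<in> ballG r c0 R"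
proof -
  have imm: "Imm r (\<gamma> t)" using Pg t unfolding pw_C1_path_def by blast
  have Lg: "0 \<le> path_len r \<gamma> D" by (rule path_len_nonneg[OF Ig])
  have "distG r (\<gamma> t) c0 < ereal R"
  proof (cases "t = 1")
    case True
    have "distG r (\<gamma> t) c0 \<le> ereal (path_len r \<beta> E)"
      using distG_le[OF Pb _ e Ib] True j by simp
    also have "\<dots> < ereal R" using L Lg by simp
    finally show ?thesis .
  next
    case False
    then have t1: "t < 1" "0 \<le> t" using t by auto
    define m1 where "m1 = 2 * (1 - t)"
    have m1: "m1 > 0" using t1 by (simp add: m1_def)
    have half: "t + m1 * (1/2) = 1" by (simp add: m1_def field_simps)
    have P1: "pwc r 0 (1/2) (\<lambda>s. \<gamma> (t + m1 * s)) (\<lambda>s \<theta>. m1 *\<^sub>R D (t + m1 * s) \<theta>)"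
      by (rule pwc_affine[OF Pg[unfolded pw_pwc] m1]) (use t1 half in auto)
    have P2: "pwc r (1/2) 1 (\<lambda>s. \<beta> (-1 + 2 * s)) (\<lambda>s \<theta>. 2 *\<^sub>R E (-1 + 2 * s) \<theta>)"
      by (rule pwc_affine[OF Pb[unfolded pw_pwc]]) auto
    have jn: "\<gamma> (t + m1 * (1/2)) = \<beta> (-1 + 2 * (1/2))" using j half by simp
    define \<mu> where "\<mu> = (\<lambda>s. if s \<le> 1/2 then \<gamma> (t + m1 * s) else \<beta> (-1 + 2 * s))"
    define E\<mu> where "E\<mu> = (\<lambda>s::real. if s \<le> 1/2 then (\<lambda>\<theta>. m1 *\<^sub>R D (t + m1 * s) \<theta>)
        else (\<lambda>\<theta>. 2 *\<^sub>R E (-1 + 2 * s) \<theta>))"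
    have P\<mu>: "pw_C1_path r \<mu> E\<mu>"
      unfolding pw_pwc \<mu>_def E\<mu>_def by (rule pwc_concat[OF P1 P2 jn])
    have \<mu>0: "\<mu> 0 = \<gamma> t" unfolding \<mu>_def by simp
    have \<mu>1: "\<mu> 1 = c0" unfolding \<mu>_def using e by simp
    let ?Gg = "\<lambda>t. G_norm r (\<gamma> t) (D t)"
    have Igt: "?Gg integrable_on {t..1}" by (rule integrable_subinterval_real[OF Ig]) (use t1 in auto)
    have i1: "((\<lambda>s. m1 * ?Gg (t + m1 * s)) has_integral integral {t..1} ?Gg) {0..1/2}"
      by (rule len_affine[OF Igt m1]) (use half in auto)
    have i2: "((\<lambda>s. 2 * G_norm r (\<beta> (-1 + 2 * s)) (E (-1 + 2 * s))) has_integral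
        integral {0..1} (\<lambda>t. G_norm r (\<beta> t) (E t))) {1/2..1}"
      by (rule len_affine[OF Ib]) auto
    have geq: "(\<lambda>s. G_norm r (\<mu> s) (E\<mu> s)) = (\<lambda>s. if s \<le> 1/2 then m1 * ?Gg (t + m1 * s)
        else 2 * G_norm r (\<beta> (-1 + 2 * s)) (E (-1 + 2 * s)))"
      using m1 by (auto simp: \<mu>_def E\<mu>_def G_norm_scale)
    have ic: "((\<lambda>s. G_norm r (\<mu> s) (E\<mu> s)) has_integral (integral {t..1} ?Gg + path_len r \<beta> E)) {0..1}"
      unfolding geq path_len_def by (rule has_integral_concat[OF i1 i2]) auto
    have I\<mu>: "(\<lambda>s. G_norm r (\<mu> s) (E\<mu> s)) integrable_on {0..1}"
      using ic by (rule has_integral_integrable)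
    have len\<mu>: "path_len r \<mu> E\<mu> = integral {t..1} ?Gg + path_len r \<beta> E"
      unfolding path_len_def[of r \<mu> E\<mu>] by (rule integral_unique[OF ic])
    have "integral {0..t} ?Gg + integral {t..1} ?Gg = integral {0..1} ?Gg"
      using Henstock_Kurzweil_Integration.integral_combine[of 0 t 1 ?Gg] t1 Ig by simp
    moreover have "0 \<le> integral {0..t} ?Gg"
      by (rule integral_nonneg[OF integrable_subinterval_real[OF Ig]]) (use t1 G_norm_nonneg in auto)
    ultimately have "integral {t..1} ?Gg \<le> path_len r \<gamma> D" unfolding path_len_def by linarith
    then have lt: "ereal (path_len r \<mu> E\<mu>) < ereal R" using len\<mu> L by simp
    have le: "distG r (\<gamma> t) c0 \<le> ereal (path_len r \<mu> E\<mu>)"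
      using distG_le[OF P\<mu> \<mu>0 \<mu>1 I\<mu>] .
    show ?thesis using le lt by (rule le_less_trans)
  qed
  then show ?thesis unfolding ballG_def using imm by simp
qed

lemma const_path:
  assumes "Imm r c"
  shows "pw_C1_path r (\<lambda>_. c) (\<lambda>_ _. 0::'a::euclidean_space)"
    "(\<lambda>t. G_norm r ((\<lambda>_. c) t) ((\<lambda>_ _. 0::'a) t)) integrable_on {0..1}"
    "path_len r (\<lambda>_. c) (\<lambda>_ _. 0::'a) = 0"
  using pwc_const[OF assms] unfolding pw_pwc path_len_def by (simp_all add: G_norm_zero integrable_0)

lemma obtain_path:
  assumes "distG r x y < ereal \<rho>"
  obtains \<gamma> D where "pw_C1_path r \<gamma> D" "\<gamma> 0 = x" "\<gamma> 1 = y"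
    "(\<lambda>t. G_norm r (\<gamma> t) (D t)) integrable_on {0..1}" "path_len r \<gamma> D < \<rho>"
  using assms unfolding distG_def Inf_less_iff by auto

theorem lemma4p8:
  fixes c0 c1 c2 :: "real \<Rightarrow> 'a::euclidean_space"
    and r \<rho> \<alpha> :: real
  assumes "r > 3/2"
    and "Imm r c0"
    and "\<rho> > 0"
    and "\<alpha> > 0"
    and "\<forall>c\<in>ballG r c0 (4 * \<rho>). \<forall>h. in_H r h \<longrightarrow>
           (1 / \<alpha>) * Hr_norm r h \<le> G_norm r c h \<and> G_norm r c h \<le> \<alpha> * Hr_norm r h"
    and "c1 \<in> ballG r c0 \<rho>"
    and "c2 \<in> ballG r c0 \<rho>"
  shows "ereal (Hr_norm r (\<lambda>\<theta>. c2 \<theta> - c1 \<theta>)) \<le> ereal \<alpha> * distG r c1 c2"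
proof -
  note hyp = assms(5)
  have apos: "\<alpha> > 0" by (rule assms(4))
  have c1: "Imm r c1" "distG r c1 c0 < ereal \<rho>" using assms(6) unfolding ballG_def by auto
  have c2: "Imm r c2" "distG r c2 c0 < ereal \<rho>" using assms(7) unfolding ballG_def by auto
  obtain \<beta>1 E1 where b1: "pw_C1_path r \<beta>1 E1" "\<beta>1 0 = c1" "\<beta>1 1 = c0"
    "(\<lambda>t. G_norm r (\<beta>1 t) (E1 t)) integrable_on {0..1}" "path_len r \<beta>1 E1 < \<rho>"
    using obtain_path[OF c1(2)] by metis
  obtain \<beta>2 E2 where b2: "pw_C1_path r \<beta>2 E2" "\<beta>2 0 = c2" "\<beta>2 1 = c0"
    "(\<lambda>t. G_norm r (\<beta>2 t) (E2 t)) integrable_on {0..1}" "path_len r \<beta>2 E2 < \<rho>"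
    using obtain_path[OF c2(2)] by metis
  note k = const_path[OF assms(2)]
  have ai1: "c1 absolutely_integrable_on {0..1}" and ai2: "c2 absolutely_integrable_on {0..1}"
    and ai0': "c0 absolutely_integrable_on {0..1}"
    using c1 c2 assms(2) by (meson Imm_in_H in_H_AI)+
  have sm: "SM r (\<lambda>\<theta>. c2 \<theta> - c1 \<theta>)"
    by (rule SM_diff[OF ai2 ai1 in_H_SM[OF Imm_in_H[OF c2(1)]] in_H_SM[OF Imm_in_H[OF c1(1)]]])
  have toc0: "PN r F (\<lambda>\<theta>. c0 \<theta> - x \<theta>) \<le> \<alpha> * path_len r \<beta> E"
    if P: "pw_C1_path r \<beta> E" "\<beta> 0 = x" "\<beta> 1 = c0"
      "(\<lambda>t. G_norm r (\<beta> t) (E t)) integrable_on {0..1}" "path_len r \<beta> E < \<rho>"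
      and F: "finite F" for \<beta> E x and F :: "int set"
  proof -
    have "\<forall>t\<in>{0..1}. \<beta> t \<in> ballG r c0 (4 * \<rho>)"
    proof
      fix t :: real assume t: "t \<in> {0..1}"
      show "\<beta> t \<in> ballG r c0 (4 * \<rho>)"
        by (rule ball_mem[OF P(1) P(4) k(1) k(2) _ _ _ t]) (use P assms(3) k(3) in auto)
    qed
    from main_bound[OF hyp apos P(1) P(4) this F] show ?thesis using P(2,3) by simp
  qed
  have bnd: "Hr_norm r (\<lambda>\<theta>. c2 \<theta> - c1 \<theta>) \<le> \<alpha> * path_len r \<gamma> D"
    if P: "pw_C1_path r \<gamma> D" "\<gamma> 0 = c1" "\<gamma> 1 = c2"
      "(\<lambda>t. G_norm r (\<gamma> t) (D t)) integrable_on {0..1}" for \<gamma> D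
  proof (rule Hr_le_PN[OF sm])
    show "0 \<le> \<alpha> * path_len r \<gamma> D" using apos path_len_nonneg[OF P(4)] by simp
    fix F :: "int set" assume F: "finite F"
    show "PN r F (\<lambda>\<theta>. c2 \<theta> - c1 \<theta>) \<le> \<alpha> * path_len r \<gamma> D"
    proof (cases "path_len r \<gamma> D < 3 * \<rho>")
      case True
      have "\<forall>t\<in>{0..1}. \<gamma> t \<in> ballG r c0 (4 * \<rho>)"
      proof
        fix t :: real assume t: "t \<in> {0..1}"
        show "\<gamma> t \<in> ballG r c0 (4 * \<rho>)"
          by (rule ball_mem[OF P(1) P(4) b2(1) b2(4) _ _ _ t]) (use P b2 True in auto)
      qed
      from main_bound[OF hyp apos P(1) P(4) this F] show ?thesis using P(2,3) by simp
    next
      case False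
      have e1: "PN r F (\<lambda>\<theta>. c0 \<theta> - c1 \<theta>) \<le> \<alpha> * path_len r \<beta>1 E1" by (rule toc0[OF b1 F])
      have e2: "PN r F (\<lambda>\<theta>. c0 \<theta> - c2 \<theta>) \<le> \<alpha> * path_len r \<beta>2 E2" by (rule toc0[OF b2 F])
      have "PN r F (\<lambda>\<theta>. c2 \<theta> - c1 \<theta>) = PN r F (\<lambda>\<theta>. (c2 \<theta> - c0 \<theta>) + (c0 \<theta> - c1 \<theta>))" by simp
      also have "\<dots> \<le> PN r F (\<lambda>\<theta>. c2 \<theta> - c0 \<theta>) + PN r F (\<lambda>\<theta>. c0 \<theta> - c1 \<theta>)"
        by (rule PN_add) (intro ai_diff ai1 ai2 ai0')+
      also have "PN r F (\<lambda>\<theta>. c2 \<theta> - c0 \<theta>) = PN r F (\<lambda>\<theta>. c0 \<theta> - c2 \<theta>)"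
        using PN_uminus[of r F "\<lambda>\<theta>. c0 \<theta> - c2 \<theta>"] by simp
      also have "\<dots> + PN r F (\<lambda>\<theta>. c0 \<theta> - c1 \<theta>) \<le> \<alpha> * path_len r \<beta>2 E2 + \<alpha> * path_len r \<beta>1 E1"
        using e1 e2 by simp
      also have "\<dots> \<le> \<alpha> * (2 * \<rho>)"
      proof -
        have s: "path_len r \<beta>2 E2 + path_len r \<beta>1 E1 \<le> 2 * \<rho>" using b1(5) b2(5) by simp
        from mult_left_mono[OF s, of \<alpha>] apos show ?thesis by (simp add: distrib_left)
      qed
      also have "\<dots> \<le> \<alpha> * path_len r \<gamma> D" using False apos assms(3) by simp
      finally show ?thesis .
    qed
  qed
  let ?H = "Hr_norm r (\<lambda>\<theta>. c2 \<theta> - c1 \<theta>)"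
  have "ereal (?H / \<alpha>) \<le> distG r c1 c2"
    unfolding distG_def
  proof (rule Inf_greatest)
    fix z assume "z \<in> {ereal (path_len r \<gamma> D) | \<gamma> D. pw_C1_path r \<gamma> D \<and> \<gamma> 0 = c1 \<and> \<gamma> 1 = c2
       \<and> (\<lambda>t. G_norm r (\<gamma> t) (D t)) integrable_on {0..1}}"
    then obtain \<gamma> D where z: "z = ereal (path_len r \<gamma> D)" and P: "pw_C1_path r \<gamma> D" "\<gamma> 0 = c1" "\<gamma> 1 = c2"
       "(\<lambda>t. G_norm r (\<gamma> t) (D t)) integrable_on {0..1}" by blast
    have "?H \<le> \<alpha> * path_len r \<gamma> D" by (rule bnd[OF P])
    then have "?H / \<alpha> \<le> path_len r \<gamma> D" using apos by (simp add: divide_le_eq mult.commute)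
    then show "ereal (?H / \<alpha>) \<le> z" unfolding z by simp
  qed
  then have "ereal \<alpha> * ereal (?H / \<alpha>) \<le> ereal \<alpha> * distG r c1 c2"
    using apos by (intro ereal_mult_left_mono) auto
  then show ?thesis using apos by simp
qed

end
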